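(* Let $-1\le\alpha\le1$ and $C=1-\log 2$. For every $N\ge1$ and every set $\omega\subset\mathbb{R}\times(-\pi,\pi]$ with $|\omega|=N$, $$\sum_{\substack{z,z'\in\omega\\ z\ne z'}}W_\alpha(z-z')\ \ge\ -N(\log N+C).$$
   Context: For $-1\le\alpha\le1$ and $(x,y)\in\mathbb{R}^2$ with $\cosh x-\cos y>0$, define $$W_\alpha(x,y)=\frac12\left[\frac{\alpha\,x\sinh x}{\cosh x-\cos y}-\log\big(2(\cosh x-\cos y)\big)+(1-\alpha)|x|\right].$$ For distinct $z,z'\in\mathbb{R}\times(-\pi,\pi]$ the difference $z-z'$ lies in the domain of $W_\alpha$. *)

theory Defs
  imports "HOL-Analysis.Analysis"
begin

definition W :: "real \<Rightarrow> real \<Rightarrow> real \<Rightarrow> real" where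
  "W \<alpha> x y = (1/2) * (\<alpha> * x * sinh x / (cosh x - cos y)
      - ln (2 * (cosh x - cos y)) + (1 - \<alpha>) * \<bar>x\<bar>)"

end

theory Submission
  imports Defs
begin


lemma norm_1_rcis_sq:
  "(cmod (1 - rcis s y))\<^sup>2 = 1 - 2 * s * cos y + s^2"
proof -
  have "(cmod (1 - rcis s y))\<^sup>2 = (1 - s*cos y)^2 + (s * sin y)^2"
    by (simp add: cmod_power2)
  also have "\<dots> = 1 - 2 * s * cos y + s^2 * ((sin y)^2 + (cos y)^2)"
    by algebra
  finally show ?thesis by (simp only: sin_cos_squared_add mult_1_right)
qed

lemma series_log:
  fixes s y :: real
  assumes "0 \<le> s" "s < 1"
  shows "(\<lambda>k. s^k * cos (real k * y) / real k) sums (- ln (1 - 2 * s * cos y + s^2) / 2)"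
proof -
  define q where "q = rcis s y"
  have nq: "cmod q < 1" using assms by (simp add: q_def complex_mod_rcis)
  have "(\<lambda>n. - ((-(-q))^n) / of_nat n) sums ln (1 + (-q))"
    using Ln_series'[of "-q"] nq by simp
  hence "(\<lambda>n. - (q^n) / of_nat n) sums ln (1 - q)" by simp
  hence "(\<lambda>n. Re (- (q^n) / of_nat n)) sums Re (ln (1 - q))"
    by (simp add: sums_complex_iff)
  moreover have "1 - q \<noteq> 0" using nq by auto
  ultimately have "(\<lambda>n. - (s^n * cos (real n * y)) / real n) sums ln (cmod (1 - q))"
    by (simp add: q_def DeMoivre2)
  hence "(\<lambda>n. - (- (s^n * cos (real n * y)) / real n)) sums (- ln (cmod (1 - q)))"
    by (rule sums_minus)
  moreover have "ln (cmod (1 - q)) = ln ((cmod (1 - q))^2) / 2"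
    using \<open>1 - q \<noteq> 0\<close> by (simp add: ln_realpow)
  hence "- ln (cmod (1 - q)) = - ln (1 - 2 * s * cos y + s^2) / 2"
    by (simp add: q_def norm_1_rcis_sq)
  ultimately show ?thesis by simp
qed

lemma series_geom:
  fixes s y :: real
  assumes "0 \<le> s" "s < 1"
  shows "(\<lambda>k. s^k * cos (real k * y)) sums ((1 - s*cos y) / (1 - 2 * s * cos y + s^2))"
proof -
  define q where "q = rcis s y"
  have nq: "cmod q < 1" using assms by (simp add: q_def complex_mod_rcis)
  have "(\<lambda>n. q^n) sums (1 / (1 - q))" using geometric_sums nq by blast
  hence "(\<lambda>n. Re (q^n)) sums Re (1 / (1 - q))" by (simp add: sums_complex_iff)
  moreover have "Re (1 / (1 - q)) = (1 - s*cos y) / (1 - 2 * s * cos y + s^2)"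
    by (simp add: Re_divide' norm_1_rcis_sq[of s y, symmetric] q_def)
  ultimately show ?thesis by (simp add: q_def DeMoivre2)
qed



definition phi :: "real \<Rightarrow> real \<Rightarrow> real \<Rightarrow> real \<Rightarrow> real" where
  "phi a r c u = (1/2) * (a * r * sinh u / (cosh u - c) - ln (2 * (cosh u - c)) + u - a * r)"

lemma sinh_ge_self: "0 \<le> (t::real) \<Longrightarrow> t \<le> sinh t"
proof -
  assume t: "0 \<le> t"
  have "(\<lambda>v. sinh v - v) 0 \<le> (\<lambda>v. sinh v - v) t"
  proof (rule DERIV_nonneg_imp_nondecreasing[OF t])
    fix v :: real
    show "\<exists>y. ((\<lambda>v. sinh v - v) has_real_derivative y) (at v) \<and> 0 \<le> y"
      by (rule exI[of _ "cosh v - 1"]) (auto intro!: derivative_eq_intros simp: cosh_real_ge_1)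
  qed
  thus ?thesis by simp
qed

lemma phi_deriv:
  assumes "cosh u - c > 0"
  shows "(phi a r c has_real_derivative
     (1/2) * (a * r * (1 - c * cosh u) / (cosh u - c)^2 - sinh u / (cosh u - c) + 1)) (at u)"
proof -
  have "(phi a r c has_real_derivative
     (1/2) * (a * r * ((cosh u * (cosh u - c) - sinh u * sinh u) / (cosh u - c)^2)
       - (2 * sinh u) / (2 * (cosh u - c)) + 1)) (at u)"
    unfolding phi_def[abs_def] using assms
    by (auto intro!: derivative_eq_intros simp: power2_eq_square field_simps)
  moreover have "cosh u * (cosh u - c) - sinh u * sinh u = 1 - c * cosh u"
    using hyperbolic_pythagoras[of u] by (simp add: power2_eq_square algebra_simps)
  moreover have "2 * sinh u / (2 * (cosh u - c)) = sinh u / (cosh u - c)"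
    by (rule mult_divide_mult_cancel_left) simp
  ultimately show ?thesis using assms by (simp only: times_divide_eq_right)
qed

lemma key_ineq:
  fixes u c :: real
  assumes "0 \<le> u" "-1 \<le> c" "c \<le> 1"
  shows "u * \<bar>1 - c * cosh u\<bar> \<le> sinh u * (cosh u - c)"
proof -
  have S: "u \<le> sinh u" using sinh_ge_self assms by auto
  have H: "1 \<le> cosh u" by (rule cosh_real_ge_1)
  have a1: "0 \<le> (sinh u - u) * (cosh u + 1)" using S H by auto
  have a2: "0 \<le> (sinh u + u) * (cosh u - 1)" using S H assms by auto
  have a3: "0 \<le> (sinh u - u) * (cosh u - 1)" using S H by auto
  have a4: "0 \<le> (sinh u + u) * (cosh u + 1)" using S H assms by auto
  have e1: "2 * (sinh u * (cosh u - c) - u * (1 - c * cosh u))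
      = (1 - c) * ((sinh u - u) * (cosh u + 1)) + (1 + c) * ((sinh u + u) * (cosh u - 1))"
    by (simp add: algebra_simps)
  have e2: "2 * (sinh u * (cosh u - c) - u * (c * cosh u - 1))
      = (1 + c) * ((sinh u - u) * (cosh u - 1)) + (1 - c) * ((sinh u + u) * (cosh u + 1))"
    by (simp add: algebra_simps)
  have c1: "0 \<le> 1 - c" and c2: "0 \<le> 1 + c" using assms by auto
  have "0 \<le> (1 - c) * ((sinh u - u) * (cosh u + 1)) + (1 + c) * ((sinh u + u) * (cosh u - 1))"
    by (rule add_nonneg_nonneg[OF mult_nonneg_nonneg[OF c1 a1] mult_nonneg_nonneg[OF c2 a2]])
  moreover have "0 \<le> (1 + c) * ((sinh u - u) * (cosh u - 1)) + (1 - c) * ((sinh u + u) * (cosh u + 1))"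
    by (rule add_nonneg_nonneg[OF mult_nonneg_nonneg[OF c2 a3] mult_nonneg_nonneg[OF c1 a4]])
  ultimately show ?thesis using e1 e2 by (cases "0 \<le> 1 - c * cosh u") auto
qed

lemma W_eq_phi:
  assumes "cosh x - cos y > 0"
  shows "W a x y = phi a \<bar>x\<bar> (cos y) \<bar>x\<bar>"
proof -
  have "x * sinh x = \<bar>x\<bar> * sinh \<bar>x\<bar>" by (cases "x \<ge> 0") auto
  thus ?thesis unfolding W_def phi_def by (simp add: algebra_simps)
qed

lemma pointwise:
  assumes D: "cosh x - cos y > 0" and e: "e > 0" and a: "\<bar>a\<bar> \<le> 1"
  shows "W a x y \<ge> phi a \<bar>x\<bar> (cos y) (\<bar>x\<bar> + e) - e/2"
proof -
  define r where "r = \<bar>x\<bar>"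
  define c where "c = cos y"
  have r0: "0 \<le> r" by (simp add: r_def)
  have Dr: "cosh r - c > 0" using D by (simp add: r_def c_def)
  have Du: "cosh u - c > 0" if "r \<le> u" for u
  proof -
    have "cosh r \<le> cosh u" using that r0 cosh_real_nonneg_le_iff by auto
    thus ?thesis using Dr by linarith
  qed
  define f' where "f' u = (1/2) * (a * r * (1 - c * cosh u) / (cosh u - c)^2 - sinh u / (cosh u - c) + 1)" for u
  have "\<exists>z. r < z \<and> z < r + e \<and> phi a r c (r + e) - phi a r c r = (r + e - r) * f' z"
  proof (rule MVT2)
    show "r < r + e" using e by simp
    fix u assume "r \<le> u" "u \<le> r + e"
    show "(phi a r c has_real_derivative f' u) (at u)"
      unfolding f'_def by (rule phi_deriv) (use Du \<open>r \<le> u\<close> in auto)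
  qed
  then obtain z where z: "r < z" "z < r + e" and eq: "phi a r c (r + e) - phi a r c r = e * f' z"
    by auto
  have Dz: "cosh z - c > 0" using Du z by auto
  have c1: "-1 \<le> c" "c \<le> 1" by (auto simp: c_def)
  have K: "z * \<bar>1 - c * cosh z\<bar> \<le> sinh z * (cosh z - c)"
    using key_ineq[of z c] z r0 c1 by auto
  have "a * r * (1 - c * cosh z) \<le> \<bar>a * r\<bar> * \<bar>1 - c * cosh z\<bar>"
    by (metis abs_ge_self abs_mult)
  also have "\<dots> \<le> z * \<bar>1 - c * cosh z\<bar>"
  proof (intro mult_right_mono)
    have "\<bar>a\<bar> * r \<le> r" using a r0 by (simp add: mult_left_le_one_le)
    thus "\<bar>a * r\<bar> \<le> z" using r0 z by (simp add: abs_mult)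
  qed simp
  finally have "a * r * (1 - c * cosh z) \<le> sinh z * (cosh z - c)" using K by linarith
  hence "a * r * (1 - c * cosh z) / (cosh z - c)^2 \<le> sinh z * (cosh z - c) / (cosh z - c)^2"
    using Dz by (intro divide_right_mono) auto
  also have "\<dots> = sinh z / (cosh z - c)" using Dz by (simp add: power2_eq_square)
  finally have h: "a * r * (1 - c * cosh z) / (cosh z - c)^2 \<le> sinh z / (cosh z - c)" .
  have gen: "X \<le> Y \<Longrightarrow> 1/2 * (X - Y + 1) \<le> (1/2::real)" for X Y by simp
  have "f' z \<le> 1/2" unfolding f'_def by (rule gen[OF h])
  hence "phi a r c (r + e) - phi a r c r \<le> e / 2" using eq e
    by (metis mult.commute mult_left_mono less_imp_le times_divide_eq_right mult_1_right)
  moreover have "W a x y = phi a r c r" using W_eq_phi[OF D] by (simp add: r_def c_def)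
  ultimately show ?thesis by (simp add: r_def c_def)
qed



definition Gk :: "real \<Rightarrow> real \<Rightarrow> real" where
  "Gk b t = (1 + b * \<bar>t\<bar>) * exp (- \<bar>t\<bar>)"

definition FF :: "real \<Rightarrow> real \<Rightarrow> real \<Rightarrow> real" where
  "FF b S T = S^2 + 2 * b * S * T + 2 * T^2"

lemma sinh_ge_self': "0 \<le> (t::real) \<Longrightarrow> t \<le> sinh t"
proof -
  assume t: "0 \<le> t"
  have "(\<lambda>v. sinh v - v) 0 \<le> (\<lambda>v. sinh v - v) t"
  proof (rule DERIV_nonneg_imp_nondecreasing[OF t])
    fix v :: real
    show "\<exists>y. ((\<lambda>v. sinh v - v) has_real_derivative y) (at v) \<and> 0 \<le> y"
      by (rule exI[of _ "cosh v - 1"]) (auto intro!: derivative_eq_intros simp: cosh_real_ge_1)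
  qed
  thus ?thesis by simp
qed

lemma FF_nonneg: "\<bar>b\<bar> \<le> 1 \<Longrightarrow> 0 \<le> FF b S T"
proof -
  assume b: "\<bar>b\<bar> \<le> 1"
  have "b^2 \<le> 1" using power_le_one[OF abs_ge_zero b, of 2] by simp
  hence "0 \<le> (S + b*T)^2 + (2 - b^2) * T^2" by (intro add_nonneg_nonneg) auto
  also have "\<dots> = FF b S T" by (simp add: FF_def power2_eq_square algebra_simps)
  finally show ?thesis .
qed

lemma FF_mono:
  assumes d: "0 \<le> d" and b: "\<bar>b\<bar> \<le> 1"
  shows "FF b (exp (-d) * S) (exp (-d) * (T + d * S)) \<le> FF b S T"
proof -
  define e where "e = exp (-d)"
  have e0: "0 < e" and e1: "e \<le> 1" using d by (auto simp: e_def)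
  have sh: "2 * d * e \<le> 1 - e^2"
  proof -
    have "d \<le> sinh d" using sinh_ge_self' d by auto
    hence "2 * d \<le> exp d - exp (-d)" by (simp add: sinh_def)
    hence "2 * d * e \<le> (exp d - exp (-d)) * e" using e0 by (intro mult_right_mono) auto
    also have "\<dots> = 1 - e^2" by (simp add: e_def power2_eq_square algebra_simps flip: exp_add)
    finally show ?thesis .
  qed
  have bb: "b^2 \<le> 1" using power_le_one[OF abs_ge_zero b, of 2] by simp
  define n11 where "n11 = 1 - e^2 * (1 + 2*b*d + 2*d^2)"
  define n12 where "n12 = b - e^2 * (b + 2*d)"
  define n22 where "n22 = 2 * (1 - e^2)"
  define dt where "dt = (2 - b^2) * (1 - e^2)^2 - 4 * d^2 * e^2"
  have dteq: "dt = n11 * n22 - n12^2"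
    by (simp add: dt_def n11_def n12_def n22_def power2_eq_square algebra_simps)
  have dt0: "0 \<le> dt"
  proof -
    have "(2 * d * e)^2 \<le> (1 - e^2)^2" using sh d e0 by (intro power_mono) auto
    moreover have "(1 - e^2)^2 \<le> (2 - b^2) * (1 - e^2)^2" using mult_right_mono[of 1 "2 - b^2" "(1 - e^2)^2"] bb by simp
    ultimately show ?thesis by (simp add: dt_def power2_eq_square algebra_simps)
  qed
  have form: "FF b S T - FF b (e * S) (e * (T + d * S)) = n11 * S^2 + 2 * n12 * S * T + n22 * T^2"
    by (simp add: FF_def n11_def n12_def n22_def power2_eq_square algebra_simps)
  have n22ge: "0 \<le> n22" using e0 e1 by (simp add: n22_def power_le_one)
  have "0 \<le> n11 * S^2 + 2 * n12 * S * T + n22 * T^2"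
  proof (cases "n22 = 0")
    case True
    hence "e = 1" using e0 e1 by (simp add: n22_def power2_eq_square) (metis mult_cancel_left1 order_less_irrefl mult_le_one less_eq_real_def mult_less_cancel_left1)
    hence "d = 0" using d by (simp add: e_def)
    thus ?thesis using True \<open>e = 1\<close> by (simp add: n11_def n12_def)
  next
    case False
    hence pos: "0 < n22" using n22ge by simp
    have "n22 * (n11 * S^2 + 2 * n12 * S * T + n22 * T^2) = (n22 * T + n12 * S)^2 + dt * S^2"
      by (simp add: dteq power2_eq_square algebra_simps)
    also have "\<dots> \<ge> 0" using dt0 by auto
    finally show ?thesis using pos by (simp add: zero_le_mult_iff)
  qed
  thus ?thesis using form by (simp add: e_def)
qed

definition SS :: "('i \<Rightarrow> real) \<Rightarrow> ('i \<Rightarrow> real) \<Rightarrow> 'i set \<Rightarrow> real \<Rightarrow> real" where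
  "SS a x I t = (\<Sum>i\<in>I. a i * exp (- (t - x i)))"
definition TT :: "('i \<Rightarrow> real) \<Rightarrow> ('i \<Rightarrow> real) \<Rightarrow> 'i set \<Rightarrow> real \<Rightarrow> real" where
  "TT a x I t = (\<Sum>i\<in>I. a i * (t - x i) * exp (- (t - x i)))"

lemma SS_shift: "SS a x I t = exp (- (t - s)) * SS a x I s"
  unfolding SS_def sum_distrib_left
  by (rule sum.cong) (auto simp: algebra_simps simp flip: exp_add)

lemma TT_shift: "TT a x I t = exp (- (t - s)) * (TT a x I s + (t - s) * SS a x I s)"
  unfolding SS_def TT_def sum_distrib_left distrib_left sum.distrib[symmetric]
  by (rule sum.cong) (auto simp: algebra_simps simp flip: exp_add)

lemma posdef_aux:
  fixes a x :: "'i \<Rightarrow> real"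
  assumes "finite I" and b: "\<bar>b\<bar> \<le> 1"
  shows "\<forall>t. (\<forall>i\<in>I. x i \<le> t) \<longrightarrow>
     FF b (SS a x I t) (TT a x I t) \<le> (\<Sum>i\<in>I. \<Sum>j\<in>I. a i * a j * Gk b (x i - x j))"
  using assms(1)
proof (induction I rule: finite_ranking_induct[where f = x])
  case empty
  then show ?case by (simp add: SS_def TT_def FF_def)
next
  case (insert i0 I)
  show ?case
  proof (cases "i0 \<in> I")
    case True
    then show ?thesis using insert by (simp add: insert_absorb)
  next
    case False
    define Q where "Q = (\<Sum>i\<in>I. \<Sum>j\<in>I. a i * a j * Gk b (x i - x j))"
    define S where "S = SS a x I (x i0)"
    define T where "T = TT a x I (x i0)"
    have IH: "FF b S T \<le> Q" using insert.IH insert.hyps(2) by (simp add: S_def T_def Q_def)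
    have cross: "(\<Sum>j\<in>I. a j * Gk b (x i0 - x j)) = S + b * T"
      unfolding S_def T_def SS_def TT_def sum_distrib_left sum.distrib[symmetric]
    proof (rule sum.cong)
      fix j assume "j \<in> I"
      hence "x j \<le> x i0" using insert.hyps(2) by auto
      thus "a j * Gk b (x i0 - x j) = a j * exp (- (x i0 - x j)) + b * (a j * (x i0 - x j) * exp (- (x i0 - x j)))"
        by (simp add: Gk_def algebra_simps)
    qed simp
    have cross2: "(\<Sum>j\<in>I. a j * Gk b (x j - x i0)) = S + b * T"
      using cross by (simp add: Gk_def abs_minus_commute)
    have Qins: "(\<Sum>i\<in>insert i0 I. \<Sum>j\<in>insert i0 I. a i * a j * Gk b (x i - x j))
        = a i0 * a i0 + 2 * a i0 * (S + b * T) + Q"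
    proof -
      have "(\<Sum>i\<in>insert i0 I. \<Sum>j\<in>insert i0 I. a i * a j * Gk b (x i - x j))
          = (\<Sum>j\<in>insert i0 I. a i0 * a j * Gk b (x i0 - x j))
            + (\<Sum>i\<in>I. a i * a i0 * Gk b (x i - x i0) + (\<Sum>j\<in>I. a i * a j * Gk b (x i - x j)))"
        using False insert.hyps(1) by (simp add: sum.insert)
      also have "\<dots> = a i0 * a i0 + a i0 * (\<Sum>j\<in>I. a j * Gk b (x i0 - x j))
            + a i0 * (\<Sum>i\<in>I. a i * Gk b (x i - x i0)) + Q"
        using False insert.hyps(1)
        by (simp add: sum.insert sum.distrib sum_distrib_left Q_def Gk_def algebra_simps)
      finally show ?thesis using cross cross2 by simp
    qed
    have S0: "SS a x (insert i0 I) (x i0) = a i0 + S"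
      using False insert.hyps(1) by (simp add: SS_def S_def)
    have T0: "TT a x (insert i0 I) (x i0) = T"
      using False insert.hyps(1) by (simp add: TT_def T_def)
    have base: "FF b (a i0 + S) T \<le> a i0 * a i0 + 2 * a i0 * (S + b * T) + Q"
    proof -
      have "FF b (a i0 + S) T = a i0 * a i0 + 2 * a i0 * (S + b * T) + FF b S T"
        by (simp add: FF_def power2_eq_square algebra_simps)
      thus ?thesis using IH by simp
    qed
    show ?thesis
    proof (intro allI impI)
      fix t assume t: "\<forall>i\<in>insert i0 I. x i \<le> t"
      hence d: "0 \<le> t - x i0" by auto
      have "FF b (SS a x (insert i0 I) t) (TT a x (insert i0 I) t)
          = FF b (exp (- (t - x i0)) * (a i0 + S)) (exp (- (t - x i0)) * (T + (t - x i0) * (a i0 + S)))"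
        using SS_shift[of a x "insert i0 I" t "x i0"] TT_shift[of a x "insert i0 I" t "x i0"] S0 T0
        by simp
      also have "\<dots> \<le> FF b (a i0 + S) T" by (rule FF_mono[OF d b])
      also have "\<dots> \<le> a i0 * a i0 + 2 * a i0 * (S + b * T) + Q" by (rule base)
      finally show "FF b (SS a x (insert i0 I) t) (TT a x (insert i0 I) t)
          \<le> (\<Sum>i\<in>insert i0 I. \<Sum>j\<in>insert i0 I. a i * a j * Gk b (x i - x j))"
        using Qins by simp
    qed
  qed
qed

lemma posdef:
  fixes a x :: "'i \<Rightarrow> real"
  assumes "finite I" and b: "\<bar>b\<bar> \<le> 1"
  shows "0 \<le> (\<Sum>i\<in>I. \<Sum>j\<in>I. a i * a j * Gk b (x i - x j))"
proof (cases "I = {}")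
  case True thus ?thesis by simp
next
  case False
  define t where "t = Max (x ` I)"
  have "\<forall>i\<in>I. x i \<le> t" using assms(1) by (auto simp: t_def)
  hence "FF b (SS a x I t) (TT a x I t) \<le> (\<Sum>i\<in>I. \<Sum>j\<in>I. a i * a j * Gk b (x i - x j))"
    using posdef_aux[OF assms] by blast
  moreover have "0 \<le> FF b (SS a x I t) (TT a x I t)" by (rule FF_nonneg[OF b])
  ultimately show ?thesis by linarith
qed



lemma A_eq:
  fixes u c :: real
  shows "1 - 2 * exp (-u) * c + (exp (-u))^2 = 2 * exp (-u) * (cosh u - c)"
proof -
  have "exp (-u) * exp u = 1" by (simp flip: exp_add)
  thus ?thesis by (simp add: cosh_def power2_eq_square algebra_simps)
qed

lemma series_K:
  fixes a e x y :: real
  assumes e: "e > 0"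
  shows "(\<lambda>k. exp (- real k * e) / real k * Gk a (real k * x) * cos (real k * y))
           sums phi a \<bar>x\<bar> (cos y) (\<bar>x\<bar> + e)"
proof -
  define u where "u = \<bar>x\<bar> + e"
  define s where "s = exp (-u)"
  define c where "c = cos y"
  have u0: "0 < u" using e by (simp add: u_def)
  have s0: "0 \<le> s" and s1: "s < 1" using u0 by (auto simp: s_def)
  have Dpos: "cosh u - c > 0"
  proof -
    have "1 < cosh u" using u0 cosh_real_ge_1[of u] cosh_real_one_iff[of u] by linarith
    moreover have "c \<le> 1" by (simp add: c_def)
    ultimately show ?thesis by linarith
  qed
  have L1: "(\<lambda>k. s^k * cos (real k * y) / real k) sums (- ln (1 - 2 * s * c + s^2) / 2)"
    using series_log[OF s0 s1] by (simp add: c_def)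
  have L2: "(\<lambda>k. a * \<bar>x\<bar> * (s^k * cos (real k * y))) sums (a * \<bar>x\<bar> * ((1 - s * c) / (1 - 2 * s * c + s^2)))"
    using series_geom[OF s0 s1] by (intro sums_mult) (simp add: c_def)
  have L3: "(\<lambda>k. if k = 0 then a * \<bar>x\<bar> else 0) sums (a * \<bar>x\<bar>)"
    using sums_single[of 0 "\<lambda>_. a * \<bar>x\<bar>"] by simp
  have L: "(\<lambda>k. s^k * cos (real k * y) / real k + a * \<bar>x\<bar> * (s^k * cos (real k * y))
             - (if k = 0 then a * \<bar>x\<bar> else 0))
       sums (- ln (1 - 2 * s * c + s^2) / 2 + a * \<bar>x\<bar> * ((1 - s * c) / (1 - 2 * s * c + s^2)) - a * \<bar>x\<bar>)"
    by (intro sums_diff sums_add L1 L2 L3)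
  have termeq: "exp (- real k * e) / real k * Gk a (real k * x) * cos (real k * y)
     = s^k * cos (real k * y) / real k + a * \<bar>x\<bar> * (s^k * cos (real k * y))
             - (if k = 0 then a * \<bar>x\<bar> else 0)" for k
  proof (cases "k = 0")
    case True thus ?thesis by simp
  next
    case False
    have sk: "s^k = exp (- real k * e) * exp (- \<bar>real k * x\<bar>)"
      by (simp add: s_def u_def abs_mult flip: exp_of_nat_mult exp_add) (simp add: algebra_simps)
    show ?thesis using False unfolding sk Gk_def
      by (simp add: abs_mult field_simps)
  qed
  have A: "1 - 2 * s * c + s^2 = 2 * s * (cosh u - c)" unfolding s_def by (rule A_eq)
  have spos: "0 < s" by (simp add: s_def)
  have val1: "- ln (1 - 2 * s * c + s^2) / 2 = - ln (2 * (cosh u - c)) / 2 + u / 2"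
  proof -
    have "ln (1 - 2 * s * c + s^2) = ln s + ln (2 * (cosh u - c))"
    proof -
      have "2 * s * (cosh u - c) = s * (2 * (cosh u - c))" by simp
      thus ?thesis unfolding A using spos Dpos ln_mult[of s "2 * (cosh u - c)"] by (simp only:) simp
    qed
    thus ?thesis by (simp add: s_def)
  qed
  have val2: "(1 - s * c) / (1 - 2 * s * c + s^2) - 1 = sinh u / (cosh u - c) / 2 - 1/2"
  proof -
    have "(1 - s * c) / (1 - 2 * s * c + s^2) - 1 = (s * c - s^2) / (2 * s * (cosh u - c))"
      unfolding A[symmetric] using spos Dpos A by (simp add: field_simps)
    also have "\<dots> = (c - s) / (2 * (cosh u - c))" using spos Dpos by (simp add: power2_eq_square field_simps)
    also have "\<dots> = sinh u / (cosh u - c) / 2 - 1/2"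
    proof -
      have "c - s = sinh u - (cosh u - c)" using cosh_minus_sinh[of u] by (simp add: s_def)
      thus ?thesis using Dpos by (simp add: field_simps)
    qed
    finally show ?thesis .
  qed
  have "- ln (1 - 2 * s * c + s^2) / 2 + a * \<bar>x\<bar> * ((1 - s * c) / (1 - 2 * s * c + s^2)) - a * \<bar>x\<bar>
      = - ln (1 - 2 * s * c + s^2) / 2 + a * \<bar>x\<bar> * ((1 - s * c) / (1 - 2 * s * c + s^2) - 1)"
    by (simp add: algebra_simps)
  also have "\<dots> = phi a \<bar>x\<bar> c u" unfolding val1 val2 phi_def by (simp add: algebra_simps)
  finally show ?thesis using L unfolding termeq[symmetric] by (simp add: u_def c_def)
qed


lemma eqg:
  fixes cc G1 G2 p q :: real
  assumes "G1 = G2"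
  shows "cc * G1 * (p + q) = cc * (p * G2) + cc * (q * G2)"
  using assms by (simp add: algebra_simps)


lemma sumK_nonneg:
  fixes \<omega> :: "(real \<times> real) set"
  assumes fin: "finite \<omega>" and e: "e > 0" and a: "\<bar>a\<bar> \<le> 1"
  shows "0 \<le> (\<Sum>z\<in>\<omega>. \<Sum>z'\<in>\<omega>. phi a \<bar>fst z - fst z'\<bar> (cos (snd z - snd z')) (\<bar>fst z - fst z'\<bar> + e))"
proof -
  define g where "g z z' k = exp (- real k * e) / real k * Gk a (real k * (fst z - fst z')) * cos (real k * (snd z - snd z'))"
    for z z' :: "real \<times> real" and k :: nat
  have SM: "(\<lambda>k. \<Sum>z\<in>\<omega>. \<Sum>z'\<in>\<omega>. g z z' k) sums
        (\<Sum>z\<in>\<omega>. \<Sum>z'\<in>\<omega>. phi a \<bar>fst z - fst z'\<bar> (cos (snd z - snd z')) (\<bar>fst z - fst z'\<bar> + e))"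
    unfolding g_def by (intro sums_sum series_K e)
  have NN: "0 \<le> (\<Sum>z\<in>\<omega>. \<Sum>z'\<in>\<omega>. g z z' k)" for k
  proof -
    define X where "X z = real k * fst z" for z :: "real \<times> real"
    define C where "C z = cos (real k * snd z)" for z :: "real \<times> real"
    define Sn where "Sn z = sin (real k * snd z)" for z :: "real \<times> real"
    have eq: "g z z' k = exp (- real k * e) / real k * (C z * C z' * Gk a (X z - X z')) +
          exp (- real k * e) / real k * (Sn z * Sn z' * Gk a (X z - X z'))" for z z'
    proof -
      have h1: "Gk a (real k * (fst z - fst z')) = Gk a (X z - X z')" unfolding X_def by (simp only: right_diff_distrib)
      have h2: "cos (real k * (snd z - snd z')) = C z * C z' + Sn z * Sn z'"
        unfolding C_def Sn_def right_diff_distrib by (rule cos_diff)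
      show ?thesis unfolding g_def h2 by (rule eqg[OF h1])
    qed
    have EQ: "(\<Sum>z\<in>\<omega>. \<Sum>z'\<in>\<omega>. g z z' k) = exp (- real k * e) / real k *
       ((\<Sum>z\<in>\<omega>. \<Sum>z'\<in>\<omega>. C z * C z' * Gk a (X z - X z')) +
        (\<Sum>z\<in>\<omega>. \<Sum>z'\<in>\<omega>. Sn z * Sn z' * Gk a (X z - X z')))"
      unfolding eq by (simp only: sum.distrib sum_distrib_left distrib_left)
    have A1: "0 \<le> (\<Sum>z\<in>\<omega>. \<Sum>z'\<in>\<omega>. C z * C z' * Gk a (X z - X z'))"
      by (rule posdef[OF fin a])
    have A2: "0 \<le> (\<Sum>z\<in>\<omega>. \<Sum>z'\<in>\<omega>. Sn z * Sn z' * Gk a (X z - X z'))"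
      by (rule posdef[OF fin a])
    have A3: "0 \<le> exp (- real k * e) / real k" by simp
    show ?thesis unfolding EQ by (rule mult_nonneg_nonneg[OF A3 add_nonneg_nonneg[OF A1 A2]])
  qed
  show ?thesis by (rule sums_le[of "\<lambda>_. 0" _ 0, OF NN sums_zero SM])
qed

lemma dom_pos:
  fixes z z' :: "real \<times> real"
  assumes "z \<noteq> z'" "-pi < snd z" "snd z \<le> pi" "-pi < snd z'" "snd z' \<le> pi"
  shows "cosh (fst z - fst z') - cos (snd z - snd z') > 0"
proof (cases "fst z = fst z'")
  case False
  hence "1 < cosh (fst z - fst z')"
    using cosh_real_ge_1[of "fst z - fst z'"] cosh_real_one_iff[of "fst z - fst z'"] by linarith
  thus ?thesis using cos_le_one[of "snd z - snd z'"] by linarith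
next
  case True
  hence ne: "snd z \<noteq> snd z'" using assms(1) by (metis prod.expand)
  have "cos (snd z - snd z') \<noteq> 1"
  proof
    assume "cos (snd z - snd z') = 1"
    then obtain n :: int where n: "snd z - snd z' = n * 2 * pi" by (auto simp: cos_one_2pi_int)
    have "\<bar>real_of_int n * 2 * pi\<bar> < 2 * pi" using assms n[symmetric] by auto
    hence "\<bar>real_of_int n\<bar> < 1" by (simp add: abs_mult)
    hence "n = 0" by linarith
    thus False using n ne by simp
  qed
  hence "cos (snd z - snd z') < 1" using cos_le_one[of "snd z - snd z'"] by linarith
  thus ?thesis using True by simp
qed

lemma cosh_bound: "0 \<le> (e::real) \<Longrightarrow> e^2 \<le> 2 * (cosh e - 1)"
proof -
  assume e: "0 \<le> e"
  have c: "cosh e = 1 + 2 * (sinh (e/2))^2"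
    using cosh_double[of "e/2"] cosh_square_eq[of "e/2"] by simp
  have "e/2 \<le> sinh (e/2)" using sinh_ge_self'[of "e/2"] e by simp
  hence "(e/2)^2 \<le> (sinh (e/2))^2" using e by (intro power_mono) auto
  thus ?thesis unfolding c by (simp add: power2_eq_square)
qed

theorem proposition2:
  fixes \<alpha> :: real and \<omega> :: "(real \<times> real) set" and N :: nat
  assumes "-1 \<le> \<alpha>" "\<alpha> \<le> 1"
    and "N \<ge> 1"
    and "finite \<omega>" "card \<omega> = N"
    and "\<forall>z\<in>\<omega>. -pi < snd z \<and> snd z \<le> pi"
  shows "(\<Sum>(z, z') \<in> {(z, z'). z \<in> \<omega> \<and> z' \<in> \<omega> \<and> z \<noteq> z'}.
            W \<alpha> (fst z - fst z') (snd z - snd z'))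
         \<ge> - real N * (ln (real N) + (1 - ln 2))"
proof -
  define P where "P = {(z, z'). z \<in> \<omega> \<and> z' \<in> \<omega> \<and> z \<noteq> z'}"
  define D where "D = (\<lambda>z. (z, z)) ` \<omega>"
  define e where "e = 2 / real N"
  have N0: "0 < real N" using assms(3) by simp
  have e0: "0 < e" using N0 by (simp add: e_def)
  have a: "\<bar>\<alpha>\<bar> \<le> 1" using assms(1,2) by simp
  have fin: "finite \<omega>" by (rule assms(4))
  define K where "K z z' = phi \<alpha> \<bar>fst z - fst z'\<bar> (cos (snd z - snd z')) (\<bar>fst z - fst z'\<bar> + e)"
    for z z' :: "real \<times> real"
  have finP: "finite P" unfolding P_def
    by (rule finite_subset[of _ "\<omega> \<times> \<omega>"]) (use fin in auto)
  have pw: "K z z' - e/2 \<le> W \<alpha> (fst z - fst z') (snd z - snd z')" if "(z, z') \<in> P" for z z'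
  proof -
    have "cosh (fst z - fst z') - cos (snd z - snd z') > 0"
      using that assms(6) unfolding P_def by (intro dom_pos) auto
    from pointwise[OF this e0 a] show ?thesis by (simp add: K_def)
  qed
  have s1: "(\<Sum>(z, z') \<in> P. K z z' - e/2) \<le> (\<Sum>(z, z') \<in> P. W \<alpha> (fst z - fst z') (snd z - snd z'))"
    by (rule sum_mono) (use pw in auto)
  have s2: "(\<Sum>(z, z') \<in> P. K z z' - e/2) = (\<Sum>(z, z') \<in> P. K z z') - e/2 * real (card P)"
    by (simp add: case_prod_unfold sum_subtractf)
  have union: "\<omega> \<times> \<omega> = P \<union> D" and disj: "P \<inter> D = {}"
    unfolding P_def D_def by auto
  have finD: "finite D" unfolding D_def using fin by simp
  have cardD: "card D = N" unfolding D_def using assms(5)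
    by (subst card_image) (auto simp: inj_on_def)
  have cardP: "card P + N = N * N"
    using card_Un_disjoint[OF finP finD disj] union cardD card_cartesian_product[of \<omega> \<omega>] assms(5)
    by simp
  have sD: "(\<Sum>(z, z') \<in> D. K z z') = (\<Sum>z\<in>\<omega>. K z z)"
    unfolding D_def by (subst sum.reindex) (auto simp: inj_on_def)
  have K0: "K z z = (1/2) * (- ln (2 * (cosh e - 1)) + e)" for z
    by (simp add: K_def phi_def)
  have sall: "(\<Sum>z\<in>\<omega>. \<Sum>z'\<in>\<omega>. K z z') = (\<Sum>(z, z') \<in> P. K z z') + real N * ((1/2) * (- ln (2 * (cosh e - 1)) + e))"
  proof -
    have "(\<Sum>z\<in>\<omega>. \<Sum>z'\<in>\<omega>. K z z') = (\<Sum>(z, z') \<in> \<omega> \<times> \<omega>. K z z')"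
      by (rule sum.cartesian_product)
    also have "\<dots> = (\<Sum>(z, z') \<in> P. K z z') + (\<Sum>(z, z') \<in> D. K z z')"
      unfolding union by (rule sum.union_disjoint[OF finP finD disj])
    also have "\<dots> = (\<Sum>(z, z') \<in> P. K z z') + real N * ((1/2) * (- ln (2 * (cosh e - 1)) + e))"
      unfolding sD K0 using assms(5) by simp
    finally show ?thesis .
  qed
  have nn: "0 \<le> (\<Sum>z\<in>\<omega>. \<Sum>z'\<in>\<omega>. K z z')"
    unfolding K_def by (rule sumK_nonneg[OF fin e0 a])
  have cb: "2 * ln e \<le> ln (2 * (cosh e - 1))"
  proof -
    have h: "e^2 \<le> 2 * (cosh e - 1)" by (rule cosh_bound) (use e0 in simp)
    have q: "0 < e^2" using e0 by simp
    have p2: "0 < 2 * (cosh e - 1)" using h q by linarith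
    have "ln (e^2) \<le> ln (2 * (cosh e - 1))" by (subst ln_le_cancel_iff[OF q p2]) (rule h)
    thus ?thesis using e0 by (simp add: ln_realpow)
  qed
  have lne: "ln e = ln 2 - ln (real N)" using N0 by (simp add: e_def ln_div)
  have ecard: "e/2 * real (card P) = real N - 1"
  proof -
    have "real (card P) = real N * real N - real N" using cardP
      by (metis add_diff_cancel_right' of_nat_add of_nat_mult)
    thus ?thesis using N0 by (simp add: e_def field_simps)
  qed
  have "- real N * (ln (real N) + (1 - ln 2)) \<le> - real N * ((1/2) * (- ln (2 * (cosh e - 1)) + e)) - (real N - 1)"
  proof -
    have "(1/2) * (- ln (2 * (cosh e - 1)) + e) \<le> ln (real N) - ln 2 + 1 / real N"
      using cb lne by (simp add: e_def)
    hence "real N * ((1/2) * (- ln (2 * (cosh e - 1)) + e)) \<le> real N * (ln (real N) - ln 2 + 1 / real N)"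
      using N0 by (intro mult_left_mono) auto
    also have "\<dots> = real N * (ln (real N) - ln 2) + 1" using N0 by (simp add: field_simps)
    finally show ?thesis by (simp add: algebra_simps)
  qed
  also have "\<dots> \<le> (\<Sum>(z, z') \<in> P. K z z') - e/2 * real (card P)"
    using sall nn ecard by linarith
  also have "\<dots> \<le> (\<Sum>(z, z') \<in> P. W \<alpha> (fst z - fst z') (snd z - snd z'))"
    using s1 s2 by linarith
  finally show ?thesis unfolding P_def .
qed

end
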